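(* Let $w\in S_k$ and let $\mathbf b=(b_1,\dots,b_{k-1})$ be non-negative integers with $\sum_i b_i=\ell(w)$. Let $F$ be the set of inversions of $w$, for $f=(i,j)\in F$ put $L(f)=\sum_{r=i}^{j-1}v_r$, and $L_w=\prod_{f\in F}L(f)$. Then: (1) the coefficient of $v^{\mathbf b}$ in $R_w$ is non-zero if and only if the coefficient of $v^{\mathbf b}$ in $L_w$ is non-zero; (2) for $1\le s\le t\le k-1$ let $K_{s,t}$ be the number of inversions $(i,j)$ of $w$ with $s\le i<j\le t+1$; then the coefficient of $v^{\mathbf b}$ in $R_w$ is non-zero if and only if $\sum_{i=s}^t b_i\ge K_{s,t}$ for all $1\le s\le t\le k-1$.
   Context: Fix $k\ge 2$. Permutations $u\in S_k$ are written in one-line notation $u=(u(1),\dots,u(k))$. An inversion of $u$ is a pair of positions $(i,j)$ with $i<j$ and $u(i)>u(j)$; $\ell(u)$ is the number of inversions. For $1\le n<m\le k$ let $u\circ(n\,m)$ denote the permutation obtained from $u$ by swapping the entries in positions $n$ and $m$. We say $u'$ covers $u$ if $u'=u\circ(n\,m)$ for some $n<m$ and $\ell(u')=\ell(u)+1$; the weight of this cover is $v_n+v_{n+1}+\dots+v_{m-1}$. For $w\in S_k$, $R_w\in\mathbb Z[v_1,\dots,v_{k-1}]$ is the sum, over all chains $\mathrm{id}=u_0,u_1,\dots,u_{\ell(w)}=w$ in which each $u_{i+1}$ covers $u_i$, of the product of the weights of the covers $u_i\to u_{i+1}$. $v^{\mathbf b}=v_1^{b_1}\cdots v_{k-1}^{b_{k-1}}$.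 *)

theory Defs
  imports Main "HOL-Library.Poly_Mapping" "HOL-Combinatorics.Permutations"
    "HOL-Combinatorics.Transposition"
begin

text \<open>Polynomials in Z[v_1,...,v_{k-1}]: finitely supported maps from exponent
  vectors (nat =>0 nat) to integer coefficients. The variable v_r is the
  monomial with exponent vector single r 1.\<close>
type_synonym mpoly = "(nat \<Rightarrow>\<^sub>0 nat) \<Rightarrow>\<^sub>0 int"

definition var :: "nat \<Rightarrow> mpoly" where
  "var r = Poly_Mapping.single (Poly_Mapping.single r 1) 1"

definition coeff :: "mpoly \<Rightarrow> (nat \<Rightarrow>\<^sub>0 nat) \<Rightarrow> int" where
  "coeff p b = Poly_Mapping.lookup p b"

text \<open>Permutations of S_k are functions permuting {1..k} (one-line notation u(i)).\<close>
definition inversions :: "nat \<Rightarrow> (nat \<Rightarrow> nat) \<Rightarrow> (nat \<times> nat) set" where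
  "inversions k u = {(i, j). 1 \<le> i \<and> i < j \<and> j \<le> k \<and> u i > u j}"

definition len :: "nat \<Rightarrow> (nat \<Rightarrow> nat) \<Rightarrow> nat" where
  "len k u = card (inversions k u)"

definition swap_pos :: "(nat \<Rightarrow> nat) \<Rightarrow> nat \<Rightarrow> nat \<Rightarrow> (nat \<Rightarrow> nat)" where
  "swap_pos u n m = u \<circ> transpose n m"

definition covers_by :: "nat \<Rightarrow> (nat \<Rightarrow> nat) \<Rightarrow> (nat \<Rightarrow> nat) \<Rightarrow> nat \<Rightarrow> nat \<Rightarrow> bool" where
  "covers_by k u u' n m \<longleftrightarrow> 1 \<le> n \<and> n < m \<and> m \<le> k \<and> u' = swap_pos u n m
      \<and> len k u' = len k u + 1"

definition covers :: "nat \<Rightarrow> (nat \<Rightarrow> nat) \<Rightarrow> (nat \<Rightarrow> nat) \<Rightarrow> bool" where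
  "covers k u u' \<longleftrightarrow> (\<exists>n m. covers_by k u u' n m)"

text \<open>Weight v_n + ... + v_{m-1} of the cover u -> u' (the pair (n,m) is unique).\<close>
definition cover_weight :: "nat \<Rightarrow> (nat \<Rightarrow> nat) \<Rightarrow> (nat \<Rightarrow> nat) \<Rightarrow> mpoly" where
  "cover_weight k u u' =
     (let (n, m) = (THE p. covers_by k u u' (fst p) (snd p)) in (\<Sum>r\<in>{n..<m}. var r))"

definition chains :: "nat \<Rightarrow> (nat \<Rightarrow> nat) \<Rightarrow> (nat \<Rightarrow> nat) list set" where
  "chains k w = {us. length us = len k w + 1 \<and> us ! 0 = id \<and> us ! len k w = w
      \<and> (\<forall>i < len k w. covers k (us ! i) (us ! Suc i))}"

definition R :: "nat \<Rightarrow> (nat \<Rightarrow> nat) \<Rightarrow> mpoly" where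
  "R k w = (\<Sum>us\<in>chains k w. \<Prod>i<len k w. cover_weight k (us ! i) (us ! Suc i))"

definition Lf :: "nat \<times> nat \<Rightarrow> mpoly" where
  "Lf f = (\<Sum>r\<in>{fst f..<snd f}. var r)"

definition Lw :: "nat \<Rightarrow> (nat \<Rightarrow> nat) \<Rightarrow> mpoly" where
  "Lw k w = (\<Prod>f\<in>inversions k w. Lf f)"

definition K :: "nat \<Rightarrow> (nat \<Rightarrow> nat) \<Rightarrow> nat \<Rightarrow> nat \<Rightarrow> nat" where
  "K k w s t = card {(i, j). (i, j) \<in> inversions k w \<and> s \<le> i \<and> j \<le> t + 1}"

end

theory Submission
  imports Defs
begin


lemma lookup_single_mult:
  "Poly_Mapping.lookup (Poly_Mapping.single a (1::int) * g) k
     = (\<Sum>q. Poly_Mapping.lookup g q when k = a + q)"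
proof -
  have "\<And>aa. (if aa = a then 1 else 0) * (\<Sum>q. Poly_Mapping.lookup g q when k = aa + q)
      = (if aa = a then (\<Sum>q. Poly_Mapping.lookup g q when k = aa + q) else 0)" by simp
  then show ?thesis by (simp add: lookup_mult lookup_single when_def)
qed

lemma Sum_any_nonneg: "(\<And>a. f a \<ge> (0::int)) \<Longrightarrow> Sum_any f \<ge> 0"
  by (simp add: Sum_any.expand_set sum_nonneg)

lemma coeff_var_mult_plus:
  "coeff (var r * g) (c + Poly_Mapping.single r 1) = coeff g c"
proof -
  have "\<And>q. (c + Poly_Mapping.single r 1 = Poly_Mapping.single r 1 + q) = (q = c)"
    by (metis add.commute add_left_cancel)
  then show ?thesis
    by (simp add: coeff_def var_def lookup_single_mult)
qed

lemma coeff_var_mult_zero: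
  assumes "Poly_Mapping.lookup b r = 0"
  shows "coeff (var r * g) b = 0"
proof -
  have "\<And>q. (b = Poly_Mapping.single r 1 + q) = False"
  proof
    fix q assume "b = Poly_Mapping.single r 1 + q"
    then have "Poly_Mapping.lookup b r = 1 + Poly_Mapping.lookup q r" by (simp add: lookup_add)
    with assms show False by simp
  qed simp
  then show ?thesis by (simp add: coeff_def var_def lookup_single_mult)
qed

lemma decomp_single:
  fixes b :: "nat \<Rightarrow>\<^sub>0 nat"
  assumes "Poly_Mapping.lookup b r \<ge> 1"
  shows "b = (b - Poly_Mapping.single r 1) + Poly_Mapping.single r 1"
proof (rule poly_mapping_eqI)
  fix k show "Poly_Mapping.lookup b k = Poly_Mapping.lookup (b - Poly_Mapping.single r 1 + Poly_Mapping.single r 1) k"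
    using assms by (cases "k = r") (simp_all add: lookup_add lookup_minus lookup_single_not_eq)
qed

lemma coeff_var_mult:
  assumes "Poly_Mapping.lookup b r \<ge> 1"
  shows "coeff (var r * g) b = coeff g (b - Poly_Mapping.single r 1)"
  using coeff_var_mult_plus[of r g "b - Poly_Mapping.single r 1"] decomp_single[OF assms] by simp

definition nonneg :: "mpoly \<Rightarrow> bool" where
  "nonneg p \<longleftrightarrow> (\<forall>b. coeff p b \<ge> 0)"

lemma nonneg_add: "nonneg p \<Longrightarrow> nonneg q \<Longrightarrow> nonneg (p + q)"
  by (simp add: nonneg_def coeff_def lookup_add)

lemma nonneg_sum: "(\<And>x. x \<in> A \<Longrightarrow> nonneg (f x)) \<Longrightarrow> nonneg (sum f A)"
  by (simp add: nonneg_def coeff_def lookup_sum sum_nonneg)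

lemma nonneg_mult: "nonneg p \<Longrightarrow> nonneg q \<Longrightarrow> nonneg (p * q)"
  unfolding nonneg_def coeff_def lookup_mult
  by (auto intro!: Sum_any_nonneg mult_nonneg_nonneg simp: when_def)

lemma nonneg_one: "nonneg 1"
  by (simp add: nonneg_def coeff_def lookup_one when_def)

lemma nonneg_var: "nonneg (var r)"
  by (simp add: nonneg_def coeff_def var_def lookup_single when_def)

lemma nonneg_prod: "(\<And>x. x \<in> A \<Longrightarrow> nonneg (f x)) \<Longrightarrow> nonneg (prod f A)"
proof (induction A rule: infinite_finite_induct)
  case (infinite A) then show ?case by (simp add: nonneg_one)
next
  case empty then show ?case by (simp add: nonneg_one)
next
  case (insert x F) then show ?case by (simp add: nonneg_mult)
qed

lemma nonneg_Lf: "nonneg (Lf f)"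
  unfolding Lf_def by (intro nonneg_sum nonneg_var)



definition ind :: "(nat \<Rightarrow> nat) \<Rightarrow> nat \<Rightarrow> nat \<Rightarrow> int" where
  "ind u p q = (if p < q \<and> u q < u p then 1 else 0)"

definition II :: "nat set \<Rightarrow> (nat \<Rightarrow> nat) \<Rightarrow> int" where
  "II W u = (\<Sum>p\<in>W. \<Sum>q\<in>W. ind u p q)"

definition gg :: "(nat \<Rightarrow> nat) \<Rightarrow> nat \<Rightarrow> nat \<Rightarrow> nat \<Rightarrow> int" where
  "gg u x v q = (if x < q \<and> u q < v then 1 else 0) + (if q < x \<and> v < u q then 1 else 0)"

definition AA :: "nat set \<Rightarrow> (nat \<Rightarrow> nat) \<Rightarrow> nat \<Rightarrow> nat \<Rightarrow> int" where
  "AA V u x v = (\<Sum>q\<in>V. gg u x v q)"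

lemma II_insert:
  assumes "finite V" "x \<notin> V"
  shows "II (insert x V) u = II V u + AA V u x (u x)"
proof -
  have "II (insert x V) u = (\<Sum>q\<in>insert x V. ind u x q) + (\<Sum>p\<in>V. \<Sum>q\<in>insert x V. ind u p q)"
    using assms by (simp add: II_def)
  also have "\<dots> = (\<Sum>q\<in>V. ind u x q) + (\<Sum>p\<in>V. ind u p x + (\<Sum>q\<in>V. ind u p q))"
    using assms by (simp add: ind_def)
  also have "\<dots> = II V u + AA V u x (u x)"
    by (simp add: II_def AA_def gg_def sum.distrib ind_def)
  finally show ?thesis .
qed

lemma II_cong: "(\<And>p. p \<in> W \<Longrightarrow> u p = u' p) \<Longrightarrow> II W u = II W u'"
  unfolding II_def ind_def by (intro sum.cong refl) auto

lemma AA_cong: "(\<And>p. p \<in> W \<Longrightarrow> u p = u' p) \<Longrightarrow> AA W u x v = AA W u' x v"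
  unfolding AA_def gg_def by (intro sum.cong refl) auto

lemma AA_insert:
  assumes "finite V" "y \<notin> V"
  shows "AA (insert y V) u x v = AA V u x v + gg u x v y"
  using assms by (simp add: AA_def)

lemma card_inv:
  assumes "1 \<le> a" "c \<le> k"
  shows "int (card {(i, j). (i, j) \<in> inversions k u \<and> a \<le> i \<and> j \<le> c}) = II {a..c} u"
proof -
  have eq: "{(i, j). (i, j) \<in> inversions k u \<and> a \<le> i \<and> j \<le> c}
      = {x \<in> {a..c} \<times> {a..c}. fst x < snd x \<and> u (snd x) < u (fst x)}"
    using assms by (auto simp: inversions_def)
  have "int (card {x \<in> {a..c} \<times> {a..c}. fst x < snd x \<and> u (snd x) < u (fst x)})
      = (\<Sum>x\<in>{x \<in> {a..c} \<times> {a..c}. fst x < snd x \<and> u (snd x) < u (fst x)}. 1)"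
    by simp
  also have "\<dots> = (\<Sum>x\<in>{a..c} \<times> {a..c}. if fst x < snd x \<and> u (snd x) < u (fst x) then 1 else 0)"
    using sum.inter_filter[of "{a..c} \<times> {a..c}" "\<lambda>_. (1::int)" "\<lambda>x. fst x < snd x \<and> u (snd x) < u (fst x)"] by simp
  also have "\<dots> = II {a..c} u"
    by (simp add: II_def ind_def sum.cartesian_product case_prod_beta)
  finally show ?thesis using eq by simp
qed

lemma len_II: "int (len k u) = II {1..k} u"
proof -
  have "inversions k u = {(i, j). (i, j) \<in> inversions k u \<and> 1 \<le> i \<and> j \<le> k}"
    by (auto simp: inversions_def)
  then show ?thesis using card_inv[of 1 k k u] by (simp add: len_def)
qed

lemma K_II:
  assumes "1 \<le> s" "t + 1 \<le> k"
  shows "int (K k w s t) = II {s..t+1} w"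
  using card_inv[OF assms] by (simp add: K_def)



definition dd :: "(nat \<Rightarrow> nat) \<Rightarrow> nat \<Rightarrow> nat \<Rightarrow> nat \<Rightarrow> int" where
  "dd u n m q = gg u n (u m) q + gg u m (u n) q - gg u n (u n) q - gg u m (u m) q"

locale tr =
  fixes u u' :: "nat \<Rightarrow> nat" and n m :: nat
  assumes inj: "inj u" and nm: "n < m" and un: "u' n = u m" and um: "u' m = u n"
    and uo: "\<And>q. q \<noteq> n \<Longrightarrow> q \<noteq> m \<Longrightarrow> u' q = u q"
begin

lemma dd_out: "q < n \<or> m < q \<Longrightarrow> dd u n m q = 0"
  using nm unfolding dd_def gg_def by (elim disjE) simp_all

lemma dd_in: "n < q \<Longrightarrow> q < m \<Longrightarrow>
  dd u n m q = (if u n < u q \<and> u q < u m then 2 else if u m < u q \<and> u q < u n then -2 else 0)"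
proof -
  assume a: "n < q" "q < m"
  then have "u q \<noteq> u n" "u q \<noteq> u m" using inj by (auto dest: injD)
  then show ?thesis using a by (auto simp: dd_def gg_def)
qed

lemma diff_both:
  assumes "finite W" "n \<in> W" "m \<in> W"
  shows "II W u' - II W u = (\<Sum>q\<in>W - {n,m}. dd u n m q)
     + (if u n < u m then 1 else 0) - (if u m < u n then 1 else 0)"
proof -
  define V where "V = W - {n, m}"
  have W: "W = insert n (insert m V)" using assms V_def by auto
  have fV: "finite V" "n \<notin> V" "m \<notin> V" "n \<notin> insert m V" using assms nm V_def by auto
  have agree: "\<And>p. p \<in> V \<Longrightarrow> u' p = u p" using uo V_def by auto
  have 1: "II W u = II V u + AA V u m (u m) + AA V u n (u n) + gg u n (u n) m"
    unfolding W using fV by (simp add: II_insert AA_insert)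
  have 2: "II W u' = II V u' + AA V u' m (u' m) + AA V u' n (u' n) + gg u' n (u' n) m"
    unfolding W using fV by (simp add: II_insert AA_insert)
  have 3: "II V u' = II V u" "AA V u' m (u m) = AA V u m (u m)" "AA V u' n x = AA V u n x" for x
    using agree by (auto intro: II_cong AA_cong)
  have 4: "AA V u' m (u n) = AA V u m (u n)" using agree by (auto intro: AA_cong)
  have g1: "gg u n (u n) m = (if u m < u n then 1 else 0)" using nm by (simp add: gg_def)
  have g2: "gg u' n (u' n) m = (if u n < u m then 1 else 0)" using nm by (simp add: gg_def un um)
  have "II W u' - II W u = AA V u m (u n) + AA V u n (u m) - AA V u m (u m) - AA V u n (u n)
      + (if u n < u m then 1 else 0) - (if u m < u n then 1 else 0)"
    unfolding 1 2 using 3 4 g1 g2 un um by simp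
  also have "AA V u m (u n) + AA V u n (u m) - AA V u m (u m) - AA V u n (u n) = (\<Sum>q\<in>V. dd u n m q)"
    by (simp add: AA_def dd_def sum.distrib sum_subtractf)
  finally show ?thesis by (simp add: V_def)
qed

lemma diff_n:
  assumes "finite W" "n \<in> W" "m \<notin> W"
  shows "II W u' - II W u = (\<Sum>q\<in>W - {n}. gg u n (u m) q - gg u n (u n) q)"
proof -
  define V where "V = W - {n}"
  have W: "W = insert n V" using assms V_def by auto
  have fV: "finite V" "n \<notin> V" using assms V_def by auto
  have agree: "\<And>p. p \<in> V \<Longrightarrow> u' p = u p" using V_def assms by (intro uo) auto
  have "II W u' - II W u = AA V u' n (u' n) - AA V u n (u n)"
    unfolding W using fV II_cong[OF agree] by (simp add: II_insert)
  also have "\<dots> = AA V u n (u m) - AA V u n (u n)" using AA_cong[OF agree, where x=n and v="u m"] un by simp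
  finally show ?thesis by (simp add: AA_def V_def sum_subtractf)
qed

lemma diff_m:
  assumes "finite W" "m \<in> W" "n \<notin> W"
  shows "II W u' - II W u = (\<Sum>q\<in>W - {m}. gg u m (u n) q - gg u m (u m) q)"
proof -
  define V where "V = W - {m}"
  have W: "W = insert m V" using assms V_def by auto
  have fV: "finite V" "m \<notin> V" using assms V_def by auto
  have agree: "\<And>p. p \<in> V \<Longrightarrow> u' p = u p" using V_def assms by (intro uo) auto
  have "II W u' - II W u = AA V u' m (u' m) - AA V u m (u m)"
    unfolding W using fV II_cong[OF agree] by (simp add: II_insert)
  also have "\<dots> = AA V u m (u n) - AA V u m (u m)" using AA_cong[OF agree, where x=m and v="u n"] um by simp
  finally show ?thesis by (simp add: AA_def V_def sum_subtractf)
qed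

lemma diff_none:
  assumes "n \<notin> W" "m \<notin> W"
  shows "II W u' = II W u"
  using assms by (intro II_cong uo) auto

lemma cover_char:
  assumes "1 \<le> n" "m \<le> k" "II {1..k} u' = II {1..k} u + 1"
  shows "u n < u m \<and> (\<forall>q. n < q \<and> q < m \<longrightarrow> \<not> (u n < u q \<and> u q < u m))"
proof -
  have W: "n \<in> {1..k}" "m \<in> {1..k}" using assms nm by auto
  note d = diff_both[OF _ W]
  have neq: "u n \<noteq> u m" using inj nm by (auto dest: injD)
  show ?thesis
  proof (cases "u n < u m")
    case False
    then have lt: "u m < u n" using neq by simp
    have "dd u n m q \<le> 0" if "q \<in> {1..k} - {n,m}" for q
      using that dd_out[of q] dd_in[of q] lt by (cases "q < n \<or> m < q") auto
    then have "(\<Sum>q\<in>{1..k} - {n,m}. dd u n m q) \<le> 0" by (rule sum_nonpos)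
    then show ?thesis using d assms(3) lt by simp
  next
    case True
    have nn: "dd u n m q \<ge> 0" if "q \<in> {1..k} - {n,m}" for q
      using that dd_out[of q] dd_in[of q] True by (cases "q < n \<or> m < q") auto
    have s0: "(\<Sum>q\<in>{1..k} - {n,m}. dd u n m q) = 0" using d assms(3) True by simp
    have "\<forall>q\<in>{1..k} - {n,m}. dd u n m q = 0"
      using sum_nonneg_eq_0_iff[of "{1..k} - {n,m}" "dd u n m"] s0 nn by blast
    moreover have "\<not> (u n < u q \<and> u q < u m)" if "n < q" "q < m" for q
    proof
      assume b: "u n < u q \<and> u q < u m"
      have "q \<in> {1..k} - {n,m}" using that assms by auto
      with calculation have "dd u n m q = 0" by blast
      with dd_in[OF that] b show False by simp
    qed
    ultimately show ?thesis using True by blast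
  qed
qed

lemma window:
  assumes cov: "u n < u m" "\<And>q. n < q \<Longrightarrow> q < m \<Longrightarrow> \<not> (u n < u q \<and> u q < u m)"
  shows "II {s..c} u' \<le> II {s..c} u + (if s \<le> n \<and> m \<le> c then 1 else 0)"
proof -
  have inj': "u q \<noteq> u p" if "q \<noteq> p" for q p using inj that by (auto dest: injD)
  consider "n \<in> {s..c}" "m \<in> {s..c}" | "n \<in> {s..c}" "m \<notin> {s..c}" | "m \<in> {s..c}" "n \<notin> {s..c}"
    | "n \<notin> {s..c}" "m \<notin> {s..c}" by blast
  then show ?thesis
  proof cases
    case 1
    have "dd u n m q = 0" if "q \<in> {s..c} - {n,m}" for q
      using that dd_out[of q] dd_in[of q] cov(1) cov(2)[of q] by (cases "q < n \<or> m < q") auto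
    then show ?thesis using diff_both[OF _ 1] 1 cov(1) by simp
  next
    case 2
    have "gg u n (u m) q - gg u n (u n) q \<le> 0" if "q \<in> {s..c} - {n}" for q
    proof -
      have "q < m" using that 2 nm by auto
      then show ?thesis using cov(1) cov(2)[of q] inj'[of q n] that by (auto simp: gg_def)
    qed
    then have "(\<Sum>q\<in>{s..c} - {n}. gg u n (u m) q - gg u n (u n) q) \<le> 0" by (rule sum_nonpos)
    then show ?thesis using diff_n[OF _ 2] by simp
  next
    case 3
    have "gg u m (u n) q - gg u m (u m) q \<le> 0" if "q \<in> {s..c} - {m}" for q
    proof -
      have "n < q" using that 3 nm by auto
      then show ?thesis using cov(1) cov(2)[of q] inj'[of q m] that by (auto simp: gg_def)
    qed
    then have "(\<Sum>q\<in>{s..c} - {m}. gg u m (u n) q - gg u m (u m) q) \<le> 0" by (rule sum_nonpos)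
    then show ?thesis using diff_m[OF _ 3] by simp
  next
    case 4
    then show ?thesis using diff_none by simp
  qed
qed

end



lemma swap_perm:
  assumes "u permutes {1..k}" "1 \<le> n" "n < m" "m \<le> k"
  shows "swap_pos u n m permutes {1..k}"
  unfolding swap_pos_def using assms by (intro permutes_compose permutes_swap_id) auto

lemma tr_swap:
  assumes "u permutes {1..k}" "n < m"
  shows "tr u (swap_pos u n m) n m"
  using assms permutes_inj[OF assms(1)] by unfold_locales (auto simp: swap_pos_def)

lemma covers_by_unique:
  assumes "u permutes {1..k}" "covers_by k u u' n m" "covers_by k u u' n' m'"
  shows "n' = n \<and> m' = m"
proof -
  have inj: "inj u" using permutes_inj[OF assms(1)] .
  have "u \<circ> transpose n m = u \<circ> transpose n' m'"
    using assms by (simp add: covers_by_def swap_pos_def)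
  then have eq: "transpose n m x = transpose n' m' x" for x
    using inj by (metis comp_apply injD)
  have o: "n < m" "n' < m'" using assms by (auto simp: covers_by_def)
  have "transpose n' m' n = m" using eq[of n] by simp
  moreover have "transpose n' m' m = n" using eq[of m] by simp
  ultimately show ?thesis using o
    by (auto simp: transpose_def split: if_splits)
qed

lemma cover_weight_eq:
  assumes "u permutes {1..k}" "covers_by k u u' n m"
  shows "cover_weight k u u' = Lf (n, m)"
proof -
  have "(THE p. covers_by k u u' (fst p) (snd p)) = (n, m)"
  proof (rule the_equality)
    show "covers_by k u u' (fst (n, m)) (snd (n, m))" using assms(2) by simp
  next
    fix p assume "covers_by k u u' (fst p) (snd p)"
    then have "fst p = n \<and> snd p = m" using covers_by_unique[OF assms] by blast
    then show "p = (n, m)" by (simp add: prod_eq_iff)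
  qed
  then show ?thesis by (simp add: cover_weight_def Lf_def)
qed

lemma nonneg_cover_weight: "nonneg (cover_weight k u u')"
  unfolding cover_weight_def Let_def
  by (cases "THE p. covers_by k u u' (fst p) (snd p)") (auto intro!: nonneg_sum nonneg_var)

lemma chain_perm:
  assumes "us \<in> chains k w" "i \<le> len k w"
  shows "(us ! i) permutes {1..k}"
  using assms(2)
proof (induction i)
  case 0 then show ?case using assms(1) permutes_id by (simp add: chains_def id_def)
next
  case (Suc i)
  then have "covers k (us ! i) (us ! Suc i)" using assms(1) by (simp add: chains_def)
  then obtain n m where "covers_by k (us ! i) (us ! Suc i) n m" by (auto simp: covers_def)
  then show ?case using Suc swap_perm[of "us ! i" k n m] by (auto simp: covers_by_def)
qed

lemma finite_chains: "finite (chains k w)"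
proof -
  have "chains k w \<subseteq> {xs. set xs \<subseteq> {p. p permutes {1..k}} \<and> length xs = len k w + 1}"
  proof
    fix us assume us: "us \<in> chains k w"
    have "set us \<subseteq> {p. p permutes {1..k}}"
    proof
      fix x assume "x \<in> set us"
      then obtain i where "i < length us" "x = us ! i" by (auto simp: in_set_conv_nth)
      then show "x \<in> {p. p permutes {1..k}}" using chain_perm[OF us, of i] us
        by (auto simp: chains_def)
    qed
    then show "us \<in> {xs. set xs \<subseteq> {p. p permutes {1..k}} \<and> length xs = len k w + 1}"
      using us by (simp add: chains_def)
  qed
  moreover have "finite {xs. set xs \<subseteq> {p. p permutes {1..k}} \<and> length xs = len k w + 1}"
    by (intro finite_lists_length_eq finite_permutations) simp
  ultimately show ?thesis by (rule finite_subset)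
qed



lemma choice:
  fixes N :: nat and S :: "nat \<Rightarrow> nat set"
  shows "coeff (\<Prod>i<N. \<Sum>r\<in>S i. var r) b \<noteq> 0 \<Longrightarrow>
   \<exists>c. (\<forall>i<N. c i \<in> S i) \<and> (\<forall>q. Poly_Mapping.lookup b q = (\<Sum>i<N. if c i = q then 1 else 0))"
proof (induction N arbitrary: b)
  case 0
  then have "b = 0" by (simp add: coeff_def lookup_one when_def split: if_splits)
  then show ?case by simp
next
  case (Suc N)
  let ?P = "\<Prod>i<N. \<Sum>r\<in>S i. var r"
  have "(\<Prod>i<Suc N. \<Sum>r\<in>S i. var r) = (\<Sum>r\<in>S N. var r * ?P)"
    by (simp add: sum_distrib_right mult.commute)
  then have "(\<Sum>r\<in>S N. coeff (var r * ?P) b) \<noteq> 0"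
    using Suc.prems by (simp add: coeff_def lookup_sum)
  then obtain r where r: "r \<in> S N" "coeff (var r * ?P) b \<noteq> 0"
    by (rule sum.not_neutral_contains_not_neutral)
  then have b1: "Poly_Mapping.lookup b r \<ge> 1" using coeff_var_mult_zero[of b r ?P]
    by (cases "Poly_Mapping.lookup b r") auto
  then have "coeff ?P (b - Poly_Mapping.single r 1) \<noteq> 0" using r coeff_var_mult by simp
  from Suc.IH[OF this] obtain c where c: "\<forall>i<N. c i \<in> S i"
    "\<forall>q. Poly_Mapping.lookup (b - Poly_Mapping.single r 1) q = (\<Sum>i<N. if c i = q then 1 else 0)"
    by blast
  define c' where "c' = c(N := r)"
  have "\<forall>i<Suc N. c' i \<in> S i" using c(1) r(1) by (auto simp: c'_def less_Suc_eq)
  moreover have "Poly_Mapping.lookup b q = (\<Sum>i<Suc N. if c' i = q then 1 else 0)" for q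
  proof -
    have "(\<Sum>i<N. if c' i = q then 1 else 0) = (\<Sum>i<N. if c i = q then (1::nat) else 0)"
      by (intro sum.cong) (auto simp: c'_def)
    then show ?thesis using c(2)[rule_format, of q] b1
      by (cases "q = r") (auto simp: c'_def lookup_minus lookup_single_not_eq)
  qed
  ultimately show ?case by blast
qed

lemma II_id: "II W (\<lambda>x. x) = 0"
proof -
  have "ind (\<lambda>x. x) p q = 0" for p q by (auto simp: ind_def)
  then show ?thesis by (simp add: II_def)
qed

lemma chain_covers_by:
  assumes "us \<in> chains k w" "i < len k w"
  defines "p \<equiv> THE p. covers_by k (us ! i) (us ! Suc i) (fst p) (snd p)"
  shows "covers_by k (us ! i) (us ! Suc i) (fst p) (snd p)"
    and "cover_weight k (us ! i) (us ! Suc i) = (\<Sum>r\<in>{fst p..<snd p}. var r)"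
proof -
  have perm: "(us ! i) permutes {1..k}" using chain_perm[OF assms(1)] assms(2) by simp
  obtain n m where nm: "covers_by k (us ! i) (us ! Suc i) n m"
    using assms(1,2) by (auto simp: chains_def covers_def)
  have "\<exists>!p. covers_by k (us ! i) (us ! Suc i) (fst p) (snd p)"
  proof
    show "covers_by k (us ! i) (us ! Suc i) (fst (n,m)) (snd (n,m))" using nm by simp
  next
    fix p assume "covers_by k (us ! i) (us ! Suc i) (fst p) (snd p)"
    then have "fst p = n \<and> snd p = m" using covers_by_unique[OF perm nm] by blast
    then show "p = (n, m)" by (simp add: prod_eq_iff)
  qed
  then show c: "covers_by k (us ! i) (us ! Suc i) (fst p) (snd p)"
    unfolding p_def by (rule theI')
  show "cover_weight k (us ! i) (us ! Suc i) = (\<Sum>r\<in>{fst p..<snd p}. var r)"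
    using cover_weight_eq[OF perm c] by (simp add: Lf_def)
qed

lemma dirA:
  assumes "coeff (R k w) b \<noteq> 0" "1 \<le> s" "t + 1 \<le> k"
  shows "(\<Sum>i\<in>{s..t}. Poly_Mapping.lookup b i) \<ge> K k w s t"
proof -
  let ?l = "len k w"
  have "(\<Sum>us\<in>chains k w. coeff (\<Prod>i<?l. cover_weight k (us ! i) (us ! Suc i)) b) \<noteq> 0"
    using assms(1) unfolding R_def coeff_def lookup_sum .
  then obtain us where us: "us \<in> chains k w"
    and nz: "coeff (\<Prod>i<?l. cover_weight k (us ! i) (us ! Suc i)) b \<noteq> 0"
    by (rule sum.not_neutral_contains_not_neutral)
  define NM where "NM i = (THE p. covers_by k (us ! i) (us ! Suc i) (fst p) (snd p))" for i
  define S where "S i = {fst (NM i)..<snd (NM i)}" for i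
  have cb: "covers_by k (us ! i) (us ! Suc i) (fst (NM i)) (snd (NM i))" if "i < ?l" for i
    using chain_covers_by(1)[OF us that] by (simp add: NM_def)
  have "(\<Prod>i<?l. cover_weight k (us ! i) (us ! Suc i)) = (\<Prod>i<?l. \<Sum>r\<in>S i. var r)"
    by (intro prod.cong refl) (simp add: chain_covers_by(2)[OF us] S_def NM_def)
  with nz have "coeff (\<Prod>i<?l. \<Sum>r\<in>S i. var r) b \<noteq> 0" by simp
  from choice[OF this] obtain c where c: "\<forall>i<?l. c i \<in> S i"
    "\<forall>q. Poly_Mapping.lookup b q = (\<Sum>i<?l. if c i = q then 1 else 0)"
    by blast
  have main: "II {s..t+1} (us ! q) \<le> int (\<Sum>i<q. if c i \<in> {s..t} then 1 else 0)"
    if "q \<le> ?l" for q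
    using that
  proof (induction q)
    case 0 then show ?case using us by (simp add: chains_def II_id id_def)
  next
    case (Suc q)
    then have q: "q < ?l" by simp
    let ?n = "fst (NM q)" and ?m = "snd (NM q)"
    have cq: "covers_by k (us ! q) (us ! Suc q) ?n ?m" using cb[OF q] .
    have perm: "(us ! q) permutes {1..k}" using chain_perm[OF us] q by simp
    have nm: "?n < ?m" "1 \<le> ?n" "?m \<le> k" and sw: "us ! Suc q = swap_pos (us ! q) ?n ?m"
      and ln: "len k (us ! Suc q) = len k (us ! q) + 1"
      using cq by (auto simp: covers_by_def)
    interpret T: tr "us ! q" "us ! Suc q" ?n ?m
      using tr_swap[OF perm nm(1)] sw by simp
    have "II {1..k} (us ! Suc q) = II {1..k} (us ! q) + 1"
      using ln len_II[of k "us ! q"] len_II[of k "us ! Suc q"] by simp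
    then have cc: "(us ! q) ?n < (us ! q) ?m"
      "\<And>x. ?n < x \<Longrightarrow> x < ?m \<Longrightarrow> \<not> ((us ! q) ?n < (us ! q) x \<and> (us ! q) x < (us ! q) ?m)"
      using T.cover_char[OF nm(2,3)] by auto
    have w: "II {s..t+1} (us ! Suc q) \<le> II {s..t+1} (us ! q) + (if s \<le> ?n \<and> ?m \<le> t+1 then 1 else 0)"
      using T.window[OF cc] by blast
    have "c q \<in> S q" using c(1) q by simp
    then have le: "(if s \<le> ?n \<and> ?m \<le> t+1 then 1 else 0) \<le> (if c q \<in> {s..t} then 1 else (0::int))"
      by (auto simp: S_def)
    have IH: "II {s..t+1} (us ! q) \<le> int (\<Sum>i<q. if c i \<in> {s..t} then 1 else 0)"
      using Suc.IH q by simp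
    have e: "int (\<Sum>i<Suc q. if c i \<in> {s..t} then 1 else 0)
        = int (\<Sum>i<q. if c i \<in> {s..t} then 1 else 0) + (if c q \<in> {s..t} then 1 else 0)"
      by simp
    show ?case unfolding e using w IH le by linarith
  qed
  have wl: "us ! ?l = w" using us by (simp add: chains_def)
  have "int (K k w s t) = II {s..t+1} w" using K_II[OF assms(2,3)] .
  also have "\<dots> = II {s..t+1} (us ! ?l)" using wl by simp
  also have "\<dots> \<le> int (\<Sum>i<?l. if c i \<in> {s..t} then 1 else 0)"
    using main by simp
  also have "(\<Sum>i<?l. if c i \<in> {s..t} then 1 else 0) = (\<Sum>q\<in>{s..t}. \<Sum>i<?l. if c i = q then (1::nat) else 0)"
    by (subst sum.swap) (simp add: sum.delta)
  also have "\<dots> = (\<Sum>q\<in>{s..t}. Poly_Mapping.lookup b q)" using c(2) by simp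
  finally have "int (K k w s t) \<le> int (\<Sum>q\<in>{s..t}. Poly_Mapping.lookup b q)" .
  then show ?thesis by (simp only: of_nat_le_iff)
qed



lemma fin_inv: "finite (inversions k u)"
proof -
  have "inversions k u \<subseteq> {1..k} \<times> {1..k}" by (auto simp: inversions_def)
  then show ?thesis by (rule finite_subset) simp
qed

lemma has_inv:
  assumes perm: "w permutes {1..k}" and ne: "w \<noteq> id"
  shows "inversions k w \<noteq> {}"
proof -
  have inj: "inj w" using permutes_inj[OF perm] .
  have "\<exists>x. w x \<noteq> x" using ne by (auto simp: fun_eq_iff)
  define x where "x = (LEAST x. w x \<noteq> x)"
  have wx: "w x \<noteq> x" unfolding x_def using \<open>\<exists>x. w x \<noteq> x\<close> by (rule LeastI_ex)
  have below: "w y = y" if "y < x" for y using not_less_Least[of y "\<lambda>x. w x \<noteq> x"] that x_def by auto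
  have xk: "x \<in> {1..k}" using wx permutes_not_in[OF perm] by blast
  have gt: "x < w x"
  proof (rule ccontr)
    assume "\<not> x < w x"
    then have "w x < x" using wx by simp
    then have "w (w x) = w x" using below by simp
    then have "w x = x" using inj by (auto dest: injD)
    with wx show False by simp
  qed
  obtain p where p: "w p = x" using permutes_surj[OF perm] by (metis surjD)
  have "p \<noteq> x" using p wx by auto
  moreover have "\<not> p < x" using below p \<open>p \<noteq> x\<close> by fastforce
  ultimately have "x < p" by simp
  moreover have "p \<in> {1..k}" using p xk permutes_in_image[OF perm, of p] by simp
  ultimately have "(x, p) \<in> inversions k w" using xk gt p by (auto simp: inversions_def)
  then show ?thesis by blast
qed

lemma adjacent_aux:
  assumes perm: "w permutes {1..k}"
  shows "(i, j) \<in> inversions k w \<Longrightarrow> w i - w j = d \<Longrightarrow>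
    \<exists>n m. 1 \<le> n \<and> n < m \<and> m \<le> k \<and> w n = w m + 1"
proof (induction d arbitrary: i j rule: less_induct)
  case (less d)
  have ij: "1 \<le> i" "i < j" "j \<le> k" "w j < w i" using less.prems by (auto simp: inversions_def)
  show ?case
  proof (cases "w i = w j + 1")
    case True then show ?thesis using ij by auto
  next
    case False
    let ?v = "w j + 1"
    have wik: "w i \<in> {1..k}" using permutes_in_image[OF perm, of i] ij by simp
    obtain p where p: "w p = ?v" using permutes_surj[OF perm] by (metis surjD)
    have pk: "p \<in> {1..k}" using p wik ij False permutes_in_image[OF perm, of p] by auto
    have "p \<noteq> j" using p by auto
    then consider "p < j" | "j < p" by linarith
    then show ?thesis
    proof cases
      case 1
      then have "(p, j) \<in> inversions k w" using pk ij p by (auto simp: inversions_def)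
      moreover have "w p - w j < d" using less.prems(2) p ij False by auto
      ultimately show ?thesis using less.IH by blast
    next
      case 2
      then have "(i, p) \<in> inversions k w" using pk ij p False by (auto simp: inversions_def)
      moreover have "w i - w p < d" using less.prems(2) p ij False by auto
      ultimately show ?thesis using less.IH by blast
    qed
  qed
qed

lemma adjacent:
  assumes perm: "w permutes {1..k}" and "inversions k w \<noteq> {}"
  shows "\<exists>n m. 1 \<le> n \<and> n < m \<and> m \<le> k \<and> w n = w m + 1"
  using assms(2) adjacent_aux[OF perm] by auto

lemma inv_swap:
  assumes perm: "w permutes {1..k}" and nm: "n < m" and adj: "w n = w m + 1"
  shows "inversions k (swap_pos w n m) = inversions k w - {(n, m)}"
proof -
  have inj: "inj w" using permutes_inj[OF perm] .
  have dn: "w x \<noteq> w n" if "x \<noteq> n" for x using inj that by (auto dest: injD)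
  have dm: "w x \<noteq> w m" if "x \<noteq> m" for x using inj that by (auto dest: injD)
  have key: "(w x < w n) = (w x < w m) \<and> (w n < w x) = (w m < w x)" if "x \<noteq> n" "x \<noteq> m" for x
    using dn[OF that(1)] dm[OF that(2)] adj by auto
  show ?thesis
  proof (intro set_eqI, clarify)
    fix i j
    show "((i, j) \<in> inversions k (swap_pos w n m)) = ((i, j) \<in> inversions k w - {(n, m)})"
      unfolding inversions_def swap_pos_def
      using nm adj key[of i] key[of j] dn dm
      by (cases "i = n"; cases "i = m"; cases "j = n"; cases "j = m") auto
  qed
qed



lemma canon:
  "w permutes {1..k} \<Longrightarrow>
   \<exists>us\<in>chains k w. (\<Prod>i<len k w. cover_weight k (us ! i) (us ! Suc i)) = Lw k w"
proof (induction "len k w" arbitrary: w)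
  case 0
  then have "inversions k w = {}" using fin_inv[of k w] by (simp add: len_def)
  then have wid: "w = id" using has_inv[OF "0.prems"] by blast
  have l0: "len k w = 0" using "0.hyps" by simp
  have "[id] \<in> chains k w" unfolding chains_def l0 using wid by simp
  moreover have "Lw k w = 1" using \<open>inversions k w = {}\<close> by (simp add: Lw_def)
  ultimately show ?case using "0.hyps"[symmetric] by force
next
  case (Suc l)
  have perm: "w permutes {1..k}" by fact
  have "inversions k w \<noteq> {}" using Suc.hyps(2) by (auto simp: len_def)
  then obtain n m where nm: "1 \<le> n" "n < m" "m \<le> k" "w n = w m + 1"
    using adjacent[OF perm] by blast
  define w' where "w' = swap_pos w n m"
  have perm': "w' permutes {1..k}" using swap_perm[OF perm nm(1-3)] by (simp add: w'_def)
  have iw': "inversions k w' = inversions k w - {(n, m)}"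
    using inv_swap[OF perm nm(2,4)] by (simp add: w'_def)
  have nmin: "(n, m) \<in> inversions k w" using nm by (auto simp: inversions_def)
  have lw': "len k w' = l"
    using Suc.hyps(2) iw' nmin fin_inv[of k w] by (simp add: len_def)
  from Suc.hyps(1)[OF lw'[symmetric] perm'] obtain us' where
    us': "us' \<in> chains k w'" and pr: "(\<Prod>i<l. cover_weight k (us' ! i) (us' ! Suc i)) = Lw k w'"
    using lw' by auto
  have bk: "swap_pos w' n m = w" by (simp add: w'_def swap_pos_def comp_assoc)
  have cb: "covers_by k w' w n m" using nm bk lw' Suc.hyps(2) by (simp add: covers_by_def)
  have lus: "length us' = Suc l" using us' lw' by (simp add: chains_def)
  define us where "us = us' @ [w]"
  have n1: "us ! i = us' ! i" if "i < Suc l" for i using that lus by (simp add: us_def nth_append)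
  have n2: "us ! Suc l = w" using lus by (simp add: us_def nth_append)
  have us'l: "us' ! l = w'" using us' lw' by (simp add: chains_def)
  have "us \<in> chains k w"
  proof -
    have "us ! 0 = id" using n1[of 0] us' by (simp add: chains_def)
    moreover have "covers k (us ! i) (us ! Suc i)" if "i < Suc l" for i
    proof (cases "i < l")
      case True
      then show ?thesis using n1 us' lw' that by (simp add: chains_def)
    next
      case False
      then have "i = l" using that by simp
      then show ?thesis using n1[of l] n2 us'l cb by (auto simp: covers_def)
    qed
    ultimately show ?thesis using lus n2 Suc.hyps(2)[symmetric] by (simp add: chains_def us_def)
  qed
  moreover have "(\<Prod>i<len k w. cover_weight k (us ! i) (us ! Suc i)) = Lw k w"
  proof -
    have "(\<Prod>i<len k w. cover_weight k (us ! i) (us ! Suc i))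
        = (\<Prod>i<l. cover_weight k (us ! i) (us ! Suc i)) * cover_weight k (us ! l) (us ! Suc l)"
      using Suc.hyps(2)[symmetric] by simp
    also have "(\<Prod>i<l. cover_weight k (us ! i) (us ! Suc i)) = Lw k w'"
      using pr n1 by (intro trans[OF prod.cong pr]) auto
    also have "cover_weight k (us ! l) (us ! Suc l) = Lf (n, m)"
      using n1[of l] n2 us'l cover_weight_eq[OF perm' cb] by simp
    also have "Lw k w' * Lf (n, m) = Lw k w"
      unfolding Lw_def iw' using prod.remove[OF fin_inv nmin, of Lf] by (simp add: mult.commute)
    finally show ?thesis .
  qed
  ultimately show ?case by blast
qed

lemma dirC:
  assumes perm: "w permutes {1..k}" and nz: "coeff (Lw k w) b \<noteq> 0"
  shows "coeff (R k w) b \<noteq> 0"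
proof -
  obtain us where us: "us \<in> chains k w"
    and pr: "(\<Prod>i<len k w. cover_weight k (us ! i) (us ! Suc i)) = Lw k w"
    using canon[OF perm] by blast
  have nn: "nonneg (\<Prod>i<len k w. cover_weight k (us' ! i) (us' ! Suc i))" for us'
    by (intro nonneg_prod nonneg_cover_weight)
  have "coeff (Lw k w) b \<ge> 0" using nn[of us] pr by (simp add: nonneg_def)
  with nz have pos: "coeff (Lw k w) b > 0" by simp
  have "coeff (R k w) b = (\<Sum>us\<in>chains k w. coeff (\<Prod>i<len k w. cover_weight k (us ! i) (us ! Suc i)) b)"
    by (simp add: R_def coeff_def lookup_sum)
  also have "\<dots> \<ge> coeff (\<Prod>i<len k w. cover_weight k (us ! i) (us ! Suc i)) b"
    using us finite_chains nn by (intro member_le_sum) (auto simp: nonneg_def)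
  finally show ?thesis using pos pr by simp
qed



lemma sum_split_at:
  fixes g :: "nat \<Rightarrow> nat"
  assumes "a \<le> Suc r" "r \<le> t"
  shows "sum g {a..t} = sum g {a..r} + sum g {Suc r..t}"
proof -
  have "{a..t} = {a..r} \<union> {Suc r..t}" using assms by auto
  moreover have "{a..r} \<inter> {Suc r..t} = {}" by auto
  ultimately show ?thesis by (simp add: sum.union_disjoint)
qed

lemma sum_minus_single:
  fixes b :: "nat \<Rightarrow>\<^sub>0 nat"
  assumes "Poly_Mapping.lookup b r \<ge> 1" "finite A"
  shows "(\<Sum>q\<in>A. Poly_Mapping.lookup b q) = (\<Sum>q\<in>A. Poly_Mapping.lookup (b - Poly_Mapping.single r 1) q) + (if r \<in> A then 1 else 0)"
proof -
  have "(\<Sum>q\<in>A. Poly_Mapping.lookup b q)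
      = (\<Sum>q\<in>A. Poly_Mapping.lookup (b - Poly_Mapping.single r 1) q + (if q = r then 1 else 0))"
    using assms(1) by (intro sum.cong refl) (auto simp: lookup_minus lookup_single_not_eq)
  also have "\<dots> = (\<Sum>q\<in>A. Poly_Mapping.lookup (b - Poly_Mapping.single r 1) q) + (if r \<in> A then 1 else 0)"
    using assms(2) by (simp add: sum.distrib)
  finally show ?thesis .
qed

lemma hall:
  fixes F :: "(nat \<times> nat) set" and b :: "nat \<Rightarrow>\<^sub>0 nat" and T :: nat
  assumes "finite F" "\<forall>f\<in>F. fst f < snd f \<and> snd f \<le> Suc T"
    "Poly_Mapping.keys b \<subseteq> {..T}"
    "(\<Sum>q\<in>{0..T}. Poly_Mapping.lookup b q) = card F"
    "\<forall>s t. card {f\<in>F. s \<le> fst f \<and> snd f \<le> Suc t} \<le> (\<Sum>q\<in>{s..t}. Poly_Mapping.lookup b q)"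
  shows "coeff (\<Prod>f\<in>F. Lf f) b > 0"
  using assms
proof (induction "card F" arbitrary: F b)
  case 0
  then have F: "F = {}" by simp
  have "\<forall>q\<in>{0..T}. Poly_Mapping.lookup b q = 0" using "0.prems"(4) F by simp
  then have "b = 0" using "0.prems"(3)
    by (intro poly_mapping_eqI) (auto simp: in_keys_iff)
  then show ?case using F by (simp add: coeff_def lookup_one when_def)
next
  case (Suc N)
  note fin = Suc.prems(1) and pr = Suc.prems(2) and ks = Suc.prems(3) and tot = Suc.prems(4)
    and win = Suc.prems(5)
  let ?lb = "Poly_Mapping.lookup b"
  have "Poly_Mapping.keys b \<noteq> {}"
  proof
    assume "Poly_Mapping.keys b = {}"
    then have "\<forall>q. ?lb q = 0" by (auto simp: in_keys_iff)
    then show False using tot Suc.hyps(2) by simp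
  qed
  define r where "r = Min (Poly_Mapping.keys b)"
  have rk: "r \<in> Poly_Mapping.keys b" using \<open>Poly_Mapping.keys b \<noteq> {}\<close> by (simp add: r_def)
  have rT: "r \<le> T" using rk ks by auto
  have br: "?lb r \<ge> 1" using rk by (simp add: in_keys_iff)
  have below: "?lb q = 0" if "q < r" for q
  proof (rule ccontr)
    assume "?lb q \<noteq> 0"
    then have "q \<in> Poly_Mapping.keys b" by (simp add: in_keys_iff)
    then have "r \<le> q" unfolding r_def by simp
    with that show False by simp
  qed
  have s0r: "(\<Sum>q\<in>{0..r}. ?lb q) = ?lb r"
  proof -
    have "{0..r} = insert r {0..<r}" by auto
    then show ?thesis using below by simp
  qed
  have s0s: "(\<Sum>q\<in>{0..t}. ?lb q) = (\<Sum>q\<in>{s..t}. ?lb q)" if "s \<le> r" for s t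
  proof (cases "s = 0")
    case False
    then have "(\<Sum>q\<in>{0..t}. ?lb q) = (\<Sum>q\<in>{0..s-1}. ?lb q) + (\<Sum>q\<in>{s..t}. ?lb q)" if "s \<le> t"
      using sum_split_at[of 0 "s-1" t ?lb] that by simp
    moreover have "(\<Sum>q\<in>{0..s-1}. ?lb q) = 0" using below that False by auto
    moreover have "(\<Sum>q\<in>{0..t}. ?lb q) = 0" if "t < s" using below that \<open>s \<le> r\<close> by auto
    ultimately show ?thesis by force
  qed simp
  define G where "G = {f\<in>F. fst f \<le> r}"
  have "G \<noteq> {}"
  proof
    assume "G = {}"
    then have "{f\<in>F. Suc r \<le> fst f \<and> snd f \<le> Suc T} = F" using pr by (auto simp: G_def)
    moreover have "card {f\<in>F. Suc r \<le> fst f \<and> snd f \<le> Suc T} \<le> (\<Sum>q\<in>{Suc r..T}. ?lb q)"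
      using win by blast
    ultimately have "card F \<le> (\<Sum>q\<in>{Suc r..T}. ?lb q)" by simp
    moreover have "(\<Sum>q\<in>{0..T}. ?lb q) = ?lb r + (\<Sum>q\<in>{Suc r..T}. ?lb q)"
      using sum_split_at[of 0 r T ?lb] rT s0r by simp
    ultimately show False using tot br by simp
  qed
  have finG: "finite G" using fin by (simp add: G_def)
  define mu where "mu = Min (snd ` G)"
  have "mu \<in> snd ` G" using \<open>G \<noteq> {}\<close> finG by (simp add: mu_def)
  then obtain f0 where f0: "f0 \<in> G" "snd f0 = mu" by auto
  have f0min: "snd f0 \<le> snd f" if "f \<in> G" for f using that finG f0 by (simp add: mu_def)
  have f0F: "f0 \<in> F" "fst f0 \<le> r" using f0 by (auto simp: G_def)
  have f0p: "fst f0 < snd f0" using pr f0F by auto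
  have rs: "r < snd f0"
  proof (rule ccontr)
    assume "\<not> r < snd f0"
    then have le: "snd f0 \<le> r" by simp
    have "f0 \<in> {f\<in>F. 0 \<le> fst f \<and> snd f \<le> Suc (snd f0 - 1)}" using f0F f0p by auto
    moreover have "finite {f\<in>F. 0 \<le> fst f \<and> snd f \<le> Suc (snd f0 - 1)}" using fin by simp
    ultimately have "0 < card {f\<in>F. 0 \<le> fst f \<and> snd f \<le> Suc (snd f0 - 1)}"
      by (intro card_gt_0_iff[THEN iffD2]) blast
    then have "1 \<le> card {f\<in>F. 0 \<le> fst f \<and> snd f \<le> Suc (snd f0 - 1)}" by simp
    moreover have "(\<Sum>q\<in>{0..snd f0 - 1}. ?lb q) = 0" using below le f0p by auto
    ultimately show False using win[rule_format, of 0 "snd f0 - 1"] by simp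
  qed
  define F' where "F' = F - {f0}"
  define b' where "b' = b - Poly_Mapping.single r 1"
  let ?lb' = "Poly_Mapping.lookup b'"
  have cF': "N = card F'" using Suc.hyps(2) f0F fin by (simp add: F'_def)
  have sm: "(\<Sum>q\<in>A. ?lb q) = (\<Sum>q\<in>A. ?lb' q) + (if r \<in> A then 1 else 0)" if "finite A" for A
    using sum_minus_single[OF br that] by (simp add: b'_def)
  have IH: "coeff (\<Prod>f\<in>F'. Lf f) b' > 0"
  proof (rule Suc.hyps(1)[OF cF'])
    show "finite F'" using fin by (simp add: F'_def)
    show "\<forall>f\<in>F'. fst f < snd f \<and> snd f \<le> Suc T" using pr by (simp add: F'_def)
    show "Poly_Mapping.keys b' \<subseteq> {..T}"
    proof
      fix q assume "q \<in> Poly_Mapping.keys b'"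
      then have "?lb' q \<noteq> 0" by (simp add: in_keys_iff)
      then have "?lb q \<noteq> 0" by (simp add: b'_def lookup_minus)
      then have "q \<in> Poly_Mapping.keys b" by (simp add: in_keys_iff)
      then show "q \<in> {..T}" using ks by auto
    qed
    show "(\<Sum>q\<in>{0..T}. ?lb' q) = card F'"
      using sm[of "{0..T}"] tot rT Suc.hyps(2) cF' by simp
    show "\<forall>s t. card {f\<in>F'. s \<le> fst f \<and> snd f \<le> Suc t} \<le> (\<Sum>q\<in>{s..t}. ?lb' q)"
    proof (intro allI)
      fix s t
      let ?W = "\<lambda>s t. {f\<in>F. s \<le> fst f \<and> snd f \<le> Suc t}"
      have sub: "{f\<in>F'. s \<le> fst f \<and> snd f \<le> Suc t} \<subseteq> ?W s t" by (auto simp: F'_def)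
      have finW: "finite (?W s t)" for s t using fin by simp
      show "card {f\<in>F'. s \<le> fst f \<and> snd f \<le> Suc t} \<le> (\<Sum>q\<in>{s..t}. ?lb' q)"
      proof (cases "r \<in> {s..t}")
        case False
        have "card {f\<in>F'. s \<le> fst f \<and> snd f \<le> Suc t} \<le> card (?W s t)" using card_mono[OF finW sub] .
        also have "\<dots> \<le> (\<Sum>q\<in>{s..t}. ?lb q)" using win by blast
        also have "\<dots> = (\<Sum>q\<in>{s..t}. ?lb' q)" using sm[of "{s..t}"] False by simp
        finally show ?thesis .
      next
        case True
        then have srt: "s \<le> r" "r \<le> t" by auto
        have eqs: "(\<Sum>q\<in>{s..t}. ?lb q) = (\<Sum>q\<in>{0..t}. ?lb q)" using s0s[OF srt(1)] by simp
        have key: "card {f\<in>F'. s \<le> fst f \<and> snd f \<le> Suc t} + 1 \<le> (\<Sum>q\<in>{0..t}. ?lb q)"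
        proof (cases "snd f0 \<le> Suc t")
          case True
          have "{f\<in>F'. s \<le> fst f \<and> snd f \<le> Suc t} \<subseteq> ?W 0 t - {f0}" by (auto simp: F'_def)
          then have "card {f\<in>F'. s \<le> fst f \<and> snd f \<le> Suc t} \<le> card (?W 0 t - {f0})"
            by (intro card_mono) (use fin in auto)
          also have "\<dots> = card (?W 0 t) - 1" using True f0F by (simp add: card_Diff_singleton_if fin)
          moreover have "f0 \<in> ?W 0 t" using True f0F by simp
          then have "card (?W 0 t) > 0" using finW[of 0 t] by (intro card_gt_0_iff[THEN iffD2]) blast
          ultimately have "card {f\<in>F'. s \<le> fst f \<and> snd f \<le> Suc t} + 1 \<le> card (?W 0 t)"
            by linarith
          then show ?thesis using win by (meson order_trans)
        next
          case False
          have "?W 0 t \<subseteq> ?W (Suc r) t"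
          proof
            fix f assume f: "f \<in> ?W 0 t"
            have "\<not> fst f \<le> r"
            proof
              assume "fst f \<le> r"
              then have "f \<in> G" using f by (simp add: G_def)
              then have "snd f0 \<le> snd f" by (rule f0min)
              with f False show False by simp
            qed
            then show "f \<in> ?W (Suc r) t" using f by simp
          qed
          then have c1: "card (?W 0 t) \<le> card (?W (Suc r) t)" by (intro card_mono finW)
          have c2: "card (?W s t) \<le> card (?W 0 t)" by (intro card_mono finW) auto
          have "card {f\<in>F'. s \<le> fst f \<and> snd f \<le> Suc t} \<le> card (?W (Suc r) t)"
            using card_mono[OF finW sub] c1 c2 by linarith
          also have "\<dots> \<le> (\<Sum>q\<in>{Suc r..t}. ?lb q)" using win by blast
          finally show ?thesis
            using sum_split_at[of 0 r t ?lb] srt s0r br by simp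
        qed
        have "(\<Sum>q\<in>{s..t}. ?lb q) = (\<Sum>q\<in>{s..t}. ?lb' q) + 1" using sm[of "{s..t}"] True by simp
        then show ?thesis using key eqs by simp
      qed
    qed
  qed
  have P: "nonneg (\<Prod>f\<in>F'. Lf f)" by (intro nonneg_prod nonneg_Lf)
  have "(\<Prod>f\<in>F. Lf f) = Lf f0 * (\<Prod>f\<in>F'. Lf f)"
    using prod.remove[OF fin f0F(1), of Lf] by (simp add: F'_def)
  also have "\<dots> = (\<Sum>q\<in>{fst f0..<snd f0}. var q * (\<Prod>f\<in>F'. Lf f))"
    by (simp add: Lf_def sum_distrib_right)
  finally have "coeff (\<Prod>f\<in>F. Lf f) b = (\<Sum>q\<in>{fst f0..<snd f0}. coeff (var q * (\<Prod>f\<in>F'. Lf f)) b)"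
    by (simp add: coeff_def lookup_sum)
  also have "\<dots> \<ge> coeff (var r * (\<Prod>f\<in>F'. Lf f)) b"
    using f0F(2) rs P by (intro member_le_sum) (auto simp: nonneg_def intro!: nonneg_mult[THEN nonneg_def[THEN iffD1], rule_format] nonneg_var)
  finally have "coeff (\<Prod>f\<in>F. Lf f) b \<ge> coeff (\<Prod>f\<in>F'. Lf f) b'"
    using coeff_var_mult[OF br] by (simp add: b'_def)
  then show ?case using IH by simp
qed


theorem mainTheorem10:
  fixes k :: nat and w :: "nat \<Rightarrow> nat" and b :: "nat \<Rightarrow>\<^sub>0 nat"
  assumes "k \<ge> 2"
    and "w permutes {1..k}"
    and "Poly_Mapping.keys b \<subseteq> {1..k-1}"
    and "(\<Sum>i\<in>{1..k-1}. Poly_Mapping.lookup b i) = len k w"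
  shows "(coeff (R k w) b \<noteq> 0 \<longleftrightarrow> coeff (Lw k w) b \<noteq> 0)
       \<and> (coeff (R k w) b \<noteq> 0 \<longleftrightarrow>
            (\<forall>s t. 1 \<le> s \<longrightarrow> s \<le> t \<longrightarrow> t \<le> k - 1 \<longrightarrow>
               (\<Sum>i\<in>{s..t}. Poly_Mapping.lookup b i) \<ge> K k w s t))"
proof -
  let ?P1 = "coeff (R k w) b \<noteq> 0"
  let ?P2 = "coeff (Lw k w) b \<noteq> 0"
  let ?P3 = "\<forall>s t. 1 \<le> s \<longrightarrow> s \<le> t \<longrightarrow> t \<le> k - 1 \<longrightarrow>
               (\<Sum>i\<in>{s..t}. Poly_Mapping.lookup b i) \<ge> K k w s t"
  have A: "?P1 \<Longrightarrow> ?P3" using dirA assms(1) by auto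
  have C: "?P2 \<Longrightarrow> ?P1" using dirC[OF assms(2)] by blast
  have B: "?P3 \<Longrightarrow> ?P2"
  proof -
    assume P3: ?P3
    let ?F = "inversions k w"
    let ?lb = "Poly_Mapping.lookup b"
    have b0: "?lb 0 = 0" using assms(3) by (auto simp: in_keys_iff)
    have "coeff (\<Prod>f\<in>?F. Lf f) b > 0"
    proof (rule hall[where T = "k - 1"])
      show "finite ?F" by (rule fin_inv)
      show "\<forall>f\<in>?F. fst f < snd f \<and> snd f \<le> Suc (k - 1)" using assms(1) by (auto simp: inversions_def)
      show "Poly_Mapping.keys b \<subseteq> {..k - 1}" using assms(3) by auto
      have "{0..k-1} = insert 0 {1..k-1}" by auto
      then show "(\<Sum>q\<in>{0..k - 1}. ?lb q) = card ?F" using assms(4) b0 by (simp add: len_def)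
      show "\<forall>s t. card {f\<in>?F. s \<le> fst f \<and> snd f \<le> Suc t} \<le> (\<Sum>q\<in>{s..t}. ?lb q)"
      proof (intro allI)
        fix s t :: nat
        define s' where "s' = max s 1"
        define t' where "t' = min t (k - 1)"
        have eqset: "{f\<in>?F. s \<le> fst f \<and> snd f \<le> Suc t} = {(i, j). (i, j) \<in> ?F \<and> s' \<le> i \<and> j \<le> t' + 1}"
          using assms(1) by (auto simp: inversions_def s'_def t'_def)
        show "card {f\<in>?F. s \<le> fst f \<and> snd f \<le> Suc t} \<le> (\<Sum>q\<in>{s..t}. ?lb q)"
        proof (cases "s' \<le> t'")
          case False
          then have e: "{(i, j). (i, j) \<in> ?F \<and> s' \<le> i \<and> j \<le> t' + 1} = {}"
            by (auto simp: inversions_def)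
          show ?thesis unfolding eqset e by simp
        next
          case True
          have "card {f\<in>?F. s \<le> fst f \<and> snd f \<le> Suc t} = K k w s' t'"
            using eqset by (simp add: K_def)
          also have "\<dots> \<le> (\<Sum>q\<in>{s'..t'}. ?lb q)"
            using P3 True by (auto simp: s'_def t'_def)
          also have "\<dots> \<le> (\<Sum>q\<in>{s..t}. ?lb q)"
            by (intro sum_mono2) (auto simp: s'_def t'_def)
          finally show ?thesis .
        qed
      qed
    qed
    then show ?P2 by (simp add: Lw_def)
  qed
  from A B C show ?thesis by blast
qed

end
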